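(* Let $s$ and $d$ be positive integers with $s\leqslant d/2$. Then $$ \left(\frac12+\frac1{2^{s+1}}\right)2^d-o(2^d)\leqslant n(d-s,d)\leqslant \left(\frac12+\frac1{2^{s+1}}\right)2^d, $$ where $o(2^d)$ refers to $d\to\infty$ with $s$ fixed. Consequently, for every fixed positive integer $s$, $$ \lim_{d\to\infty}\frac{n(d-s,d)}{2^d}=\frac{2^s+1}{2^{s+1}}. $$
   Context: A box in $\mathbb{R}^d$ is an axis-parallel $d$-dimensional cuboid. For a positive integer $k\leqslant d$, two boxes in $\mathbb{R}^d$ are called $k$-neighborly if their intersection is a box of dimension at least $d-k$ and at most $d-1$. $n(k,d)$ denotes the maximum size of a family of pairwise $k$-neighborly boxes in $\mathbb{R}^d$. *)

theory Defs
  imports Complex_Main "HOL-Library.Landau_Symbols"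
begin

text \<open>Points of R^d are modelled as functions nat => real that vanish outside {..<d}.\<close>

definition box_set :: "nat \<Rightarrow> (nat \<Rightarrow> real) \<Rightarrow> (nat \<Rightarrow> real) \<Rightarrow> (nat \<Rightarrow> real) set" where
  "box_set d a b = {x. (\<forall>i<d. a i \<le> x i \<and> x i \<le> b i) \<and> (\<forall>i\<ge>d. x i = 0)}"

definition is_box_of_dim :: "nat \<Rightarrow> nat \<Rightarrow> (nat \<Rightarrow> real) set \<Rightarrow> bool" where
  "is_box_of_dim d m C \<longleftrightarrow> (\<exists>a b. (\<forall>i<d. a i \<le> b i) \<and> card {i. i < d \<and> a i < b i} = m
      \<and> C = box_set d a b)"

definition is_box :: "nat \<Rightarrow> (nat \<Rightarrow> real) set \<Rightarrow> bool" where
  "is_box d B \<longleftrightarrow> (\<exists>a b. (\<forall>i<d. a i < b i) \<and> B = box_set d a b)"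

definition neighborly :: "nat \<Rightarrow> nat \<Rightarrow> (nat \<Rightarrow> real) set \<Rightarrow> (nat \<Rightarrow> real) set \<Rightarrow> bool" where
  "neighborly k d B C \<longleftrightarrow> (\<exists>m. d - k \<le> m \<and> m \<le> d - 1 \<and> is_box_of_dim d m (B \<inter> C))"

definition neighborly_family :: "nat \<Rightarrow> nat \<Rightarrow> (nat \<Rightarrow> real) set set \<Rightarrow> bool" where
  "neighborly_family k d F \<longleftrightarrow> (\<forall>B\<in>F. is_box d B) \<and>
      (\<forall>B\<in>F. \<forall>C\<in>F. B \<noteq> C \<longrightarrow> neighborly k d B C)"

definition nkd :: "nat \<Rightarrow> nat \<Rightarrow> nat" where
  "nkd k d = Max {card F | F. finite F \<and> neighborly_family k d F}"

end

theory Submission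
  imports Defs
begin


lemma cb_step: "(k+1) * (2*(k+1) choose (k+1)) = 2*(2*k+1) * (2*k choose k)"
proof -
  have e1: "Suc k * (Suc (2*k+1) choose Suc k) = Suc (2*k+1) * ((2*k+1) choose k)"
    by (rule Suc_times_binomial)
  have e2: "Suc (2*k) * (2*k choose k) = (Suc (2*k) choose Suc k) * Suc k"
    by (rule Suc_times_binomial_eq)
  have e3: "(Suc (2*k) choose Suc k) = (2*k+1) choose k"
    using central_binomial_odd[of "2*k+1"] by simp
  define A where "A = 2*(k+1) choose (k+1)"
  define B where "B = (2*k+1) choose k"
  define C where "C = 2*k choose k"
  have f1: "(k+1)*A = (2*k+2)*B" using e1 unfolding A_def B_def
    by (metis Suc_eq_plus1 add_2_eq_Suc' mult_2 add.commute add.left_commute)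
  have f2: "B*(k+1) = (2*k+1)*C" using e2 e3 unfolding B_def C_def by simp
  have "(k+1)*((k+1)*A) = (k+1)*(2*(2*k+1)*C)"
  proof -
    have "(k+1)*((k+1)*A) = 2*(k+1)*(B*(k+1))" using f1 by (simp add: algebra_simps)
    also have "\<dots> = (k+1)*(2*(2*k+1)*C)" using f2 by (simp add: algebra_simps)
    finally show ?thesis .
  qed
  then have "(k+1)*A = 2*(2*k+1)*C" by (metis mult_left_cancel Suc_eq_plus1 nat.distinct(1))
  then show ?thesis unfolding A_def C_def .
qed

lemma cb_bound: "(2*k choose k)^2 * (3*k+1) \<le> 16^k"
proof (induction k)
  case 0 then show ?case by simp
next
  case (Suc k)
  define c where "c = 2*k choose k"
  define c' where "c' = 2*(k+1) choose (k+1)"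
  have st: "(k+1) * c' = 2*(2*k+1) * c" using cb_step[of k] unfolding c_def c'_def .
  have "(k+1)^2 * (c'^2 * (3*k+4)) = (2*(2*k+1)*c)^2 * (3*k+4)"
    using st by (metis power_mult_distrib mult.assoc)
  also have "\<dots> = c^2 * (4 * ((2*k+1)^2 * (3*k+4)))" by (simp add: power2_eq_square algebra_simps)
  also have "\<dots> \<le> c^2 * (4 * (4*(k+1)^2*(3*k+1)))"
  proof -
    have "(2*k+1)^2 * (3*k+4) \<le> 4*(k+1)^2*(3*k+1)" by (simp add: power2_eq_square algebra_simps)
    then show ?thesis by simp
  qed
  also have "\<dots> = (k+1)^2 * (16 * (c^2 * (3*k+1)))" by (simp add: algebra_simps)
  also have "\<dots> \<le> (k+1)^2 * (16 * 16^k)" using Suc.IH unfolding c_def by simp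
  finally have "c'^2 * (3*k+4) \<le> 16 * 16^k"
    by (simp only: mult_le_cancel1) simp
  then show ?case unfolding c'_def by (simp add: algebra_simps)
qed

lemma mid_bound: "(n choose (n div 2))^2 * n \<le> 4^n"
proof (cases "even n")
  case True
  then obtain k where n: "n = 2*k" by blast
  have "(n choose (n div 2))^2 * n \<le> (2*k choose k)^2 * (3*k+1)" using n by simp
  also have "\<dots> \<le> 16^k" by (rule cb_bound)
  also have "16^k = (4::nat)^n" using n by (simp add: power_mult)
  finally show ?thesis .
next
  case False
  then obtain k where n: "n = 2*k+1" using oddE by blast
  have e2: "Suc (2*k) * (2*k choose k) = (Suc (2*k) choose Suc k) * Suc k"
    by (rule Suc_times_binomial_eq)
  have e3: "(Suc (2*k) choose Suc k) = (2*k+1) choose k"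
    using central_binomial_odd[of "2*k+1"] by simp
  have le2: "(2*k+1) choose k \<le> 2 * (2*k choose k)"
  proof -
    have "((2*k+1) choose k) * (k+1) = (2*k+1) * (2*k choose k)" using e2 e3 by simp
    also have "\<dots> \<le> 2*(k+1) * (2*k choose k)" by simp
    finally show ?thesis by (metis mult.assoc mult.commute mult_le_cancel1 zero_less_Suc add.commute plus_1_eq_Suc)
  qed
  have nd: "n div 2 = k" using n by simp
  have "(n choose (n div 2))^2 * n \<le> (2 * (2*k choose k))^2 * (3*k+1)"
    unfolding nd using le2 n by (intro mult_mono power_mono) auto
  also have "\<dots> = 4 * ((2*k choose k)^2 * (3*k+1))" by (simp add: power2_eq_square)
  also have "\<dots> \<le> 4 * 16^k" using cb_bound[of k] by simp
  also have "\<dots> = 4^n" using n by (simp add: power_mult power_add)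
  finally show ?thesis .
qed

lemma mid_bound_real: "real (n choose k) * sqrt (real n) \<le> 2^n"
proof -
  have "(n choose k)^2 * n \<le> (n choose (n div 2))^2 * n"
    using binomial_maximum[of n k] by (intro mult_right_mono power_mono) auto
  also have "\<dots> \<le> 4^n" by (rule mid_bound)
  finally have h: "real ((n choose k)^2 * n) \<le> real (4^n)" by linarith
  have "real (n choose k) * sqrt (real n) = sqrt (real ((n choose k)^2 * n))"
    by (simp add: real_sqrt_mult)
  also have "\<dots> \<le> sqrt (real (4^n))" using h by simp
  also have "real (4^n) = (2^n)^2" by (simp add: power2_eq_square power_mult_distrib[symmetric])
  finally show ?thesis by simp
qed


lemma box_set_inter:
  "box_set d a b \<inter> box_set d a' b' = box_set d (\<lambda>i. max (a i) (a' i)) (\<lambda>i. min (b i) (b' i))"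
  by (auto simp: box_set_def)

lemma box_set_unique:
  assumes le: "\<forall>i<d. a i \<le> b i" and eq: "box_set d a b = box_set d a' b'" and i: "i < d"
  shows "a i = a' i \<and> b i = b' i"
proof -
  define pa where "pa = (\<lambda>j. if j < d then a j else 0)"
  define pb where "pb = (\<lambda>j. if j < d then b j else 0)"
  have "pa \<in> box_set d a b" "pb \<in> box_set d a b" using le by (auto simp: box_set_def pa_def pb_def)
  then have A: "pa \<in> box_set d a' b'" "pb \<in> box_set d a' b'" using eq by auto
  then have le': "\<forall>j<d. a' j \<le> b' j" by (auto simp: box_set_def pa_def)
  have h1: "a' i \<le> a i" "b i \<le> b' i" using A i by (auto simp: box_set_def pa_def pb_def)
  define qa where "qa = (\<lambda>j. if j < d then a' j else 0)"
  define qb where "qb = (\<lambda>j. if j < d then b' j else 0)"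
  have "qa \<in> box_set d a' b'" "qb \<in> box_set d a' b'" using le' by (auto simp: box_set_def qa_def qb_def)
  then have B: "qa \<in> box_set d a b" "qb \<in> box_set d a b" using eq by auto
  have h2: "a i \<le> a' i" "b' i \<le> b i" using B i by (auto simp: box_set_def qa_def qb_def)
  show ?thesis using h1 h2 by auto
qed

lemma dim_box_set:
  assumes "is_box_of_dim d m (box_set d a b)"
  shows "(\<forall>i<d. a i \<le> b i) \<and> m = card {i. i < d \<and> a i < b i}"
proof -
  obtain a' b' where le': "\<forall>i<d. a' i \<le> b' i" and m: "card {i. i < d \<and> a' i < b' i} = m"
    and eq: "box_set d a b = box_set d a' b'"
    using assms unfolding is_box_of_dim_def by blast
  have u: "\<And>i. i < d \<Longrightarrow> a' i = a i \<and> b' i = b i"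
    using box_set_unique[OF le' eq[symmetric]] by blast
  have "{i. i < d \<and> a' i < b' i} = {i. i < d \<and> a i < b i}" using u by auto
  then show ?thesis using le' u m by auto
qed

lemma upper:
  fixes F :: "(nat \<Rightarrow> real) set set"
  assumes s1: "1 \<le> s" and sd: "s \<le> d" and fin: "finite F" and nf: "neighborly_family (d-s) d F"
  shows "real (card F) \<le> (1/2 + 1/2^(s+1)) * 2^d"
proof -
  have d0: "0 < d" using s1 sd by simp
  have "\<forall>B\<in>F. \<exists>p. (\<forall>i<d. fst p i < snd p i) \<and> B = box_set d (fst p) (snd p)"
  proof
    fix B assume "B \<in> F"
    then have "is_box d B" using nf unfolding neighborly_family_def by blast
    then obtain a b where "\<forall>i<d. a i < b i" "B = box_set d a b"
      unfolding is_box_def by blast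
    then show "\<exists>p. (\<forall>i<d. fst p i < snd p i) \<and> B = box_set d (fst p) (snd p)"
      by (intro exI[of _ "(a,b)"]) simp
  qed
  from bchoice[OF this] obtain p where p: "\<forall>B\<in>F. (\<forall>i<d. fst (p B) i < snd (p B) i) \<and> B = box_set d (fst (p B)) (snd (p B))"
    by blast
  define lo where "lo B = fst (p B)" for B
  define hi where "hi B = snd (p B)" for B
  have lohi: "\<And>B i. B \<in> F \<Longrightarrow> i < d \<Longrightarrow> lo B i < hi B i"
  proof -
    fix B i assume "B \<in> F" "i < d"
    then show "lo B i < hi B i" using p unfolding lo_def hi_def by (meson)
  qed
  have Beq: "\<And>B. B \<in> F \<Longrightarrow> B = box_set d (lo B) (hi B)"
  proof -
    fix B assume "B \<in> F"
    then show "B = box_set d (lo B) (hi B)" using p unfolding lo_def hi_def by (meson)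
  qed
  have inter: "\<And>B C. B \<in> F \<Longrightarrow> C \<in> F \<Longrightarrow> B \<inter> C = box_set d (\<lambda>i. max (lo B i) (lo C i)) (\<lambda>i. min (hi B i) (hi C i))"
  proof -
    fix B C assume "B \<in> F" "C \<in> F"
    then have "B \<inter> C = box_set d (lo B) (hi B) \<inter> box_set d (lo C) (hi C)" using Beq[of B] Beq[of C] by argo
    then show "?thesis B C" by (simp add: box_set_inter)
  qed
  have nb: "\<And>B C. B \<in> F \<Longrightarrow> C \<in> F \<Longrightarrow> B \<noteq> C \<Longrightarrow>
      (\<forall>i<d. max (lo B i) (lo C i) \<le> min (hi B i) (hi C i)) \<and>
      s \<le> card {i. i < d \<and> max (lo B i) (lo C i) < min (hi B i) (hi C i)} \<and>
      card {i. i < d \<and> max (lo B i) (lo C i) < min (hi B i) (hi C i)} \<le> d - 1"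
  proof -
    fix B C assume BC: "B \<in> F" "C \<in> F" "B \<noteq> C"
    then obtain m where m: "d - (d - s) \<le> m" "m \<le> d - 1" "is_box_of_dim d m (B \<inter> C)"
      using nf unfolding neighborly_family_def neighborly_def by blast
    have "is_box_of_dim d m (box_set d (\<lambda>i. max (lo B i) (lo C i)) (\<lambda>i. min (hi B i) (hi C i)))"
      using m(3) inter[OF BC(1,2)] by simp
    from dim_box_set[OF this] show "?thesis B C" using m sd by auto
  qed
  have NE: "\<And>B C i. B \<in> F \<Longrightarrow> C \<in> F \<Longrightarrow> i < d \<Longrightarrow> lo C i \<le> hi B i"
  proof -
    fix B C i assume a: "B \<in> F" "C \<in> F" "i < d"
    show "lo C i \<le> hi B i"
    proof (cases "B = C")
      case True then show ?thesis using lohi a by force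
    next
      case False then show ?thesis using nb[OF a(1,2)] a(3) by fastforce
    qed
  qed
  define P where "P i = (SOME q. \<forall>B\<in>F. \<forall>C\<in>F. hi B i = lo C i \<longrightarrow> hi B i = q)" for i
  have P: "\<And>B C i. B \<in> F \<Longrightarrow> C \<in> F \<Longrightarrow> i < d \<Longrightarrow> hi B i = lo C i \<Longrightarrow> hi B i = P i"
  proof -
    fix B C i assume a: "B \<in> F" "C \<in> F" "i < d" "hi B i = lo C i"
    have ex: "\<exists>q. \<forall>B\<in>F. \<forall>C\<in>F. hi B i = lo C i \<longrightarrow> hi B i = q"
    proof (intro exI[of _ "hi B i"] ballI impI)
      fix B' C' assume b: "B' \<in> F" "C' \<in> F" "hi B' i = lo C' i"
      have "lo C i \<le> hi B' i" using NE[OF b(1) a(2) a(3)] .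
      moreover have "lo C' i \<le> hi B i" using NE[OF a(1) b(2) a(3)] .
      ultimately show "hi B' i = hi B i" using a(4) b(3) by linarith
    qed
    show "hi B i = P i" unfolding P_def using someI_ex[OF ex] a by blast
  qed
  define zero where "zero B i \<longleftrightarrow> hi B i = P i" for B i
  define one where "one B i \<longleftrightarrow> lo B i = P i" for B i
  have zo: "\<And>B i. B \<in> F \<Longrightarrow> i < d \<Longrightarrow> \<not> (zero B i \<and> one B i)"
    using lohi unfolding zero_def one_def by force
  have touch: "\<And>B C i. B \<in> F \<Longrightarrow> C \<in> F \<Longrightarrow> i < d \<Longrightarrow>
     (max (lo B i) (lo C i) = min (hi B i) (hi C i)) \<longleftrightarrow> (zero B i \<and> one C i) \<or> (one B i \<and> zero C i)"
  proof -
    fix B C i assume a: "B \<in> F" "C \<in> F" "i < d"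
    have l1: "lo B i < hi B i" "lo C i < hi C i" using lohi a by auto
    have n1: "lo C i \<le> hi B i" "lo B i \<le> hi C i" using NE a by auto
    show "?thesis B C i"
    proof
      assume h: "max (lo B i) (lo C i) = min (hi B i) (hi C i)"
      show "(zero B i \<and> one C i) \<or> (one B i \<and> zero C i)"
      proof (cases "hi B i = lo C i")
        case True
        then have "hi B i = P i" using P a by blast
        then show ?thesis using True unfolding zero_def one_def by simp
      next
        case False
        then have "hi C i = lo B i" using h l1 n1 by (auto simp: max_def min_def split: if_splits)
        then have "hi C i = P i" using P a by metis
        then show ?thesis using \<open>hi C i = lo B i\<close> unfolding zero_def one_def by simp
      qed
    next
      assume "(zero B i \<and> one C i) \<or> (one B i \<and> zero C i)"
      then show "max (lo B i) (lo C i) = min (hi B i) (hi C i)"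
        using l1 n1 unfolding zero_def one_def by (auto simp: max_def min_def)
    qed
  qed
  define T where "T B C = {i. i < d \<and> ((zero B i \<and> one C i) \<or> (one B i \<and> zero C i))}" for B C
  have Tb: "\<And>B C. B \<in> F \<Longrightarrow> C \<in> F \<Longrightarrow> B \<noteq> C \<Longrightarrow> 1 \<le> card (T B C) \<and> card (T B C) \<le> d - s"
  proof -
    fix B C assume a: "B \<in> F" "C \<in> F" "B \<noteq> C"
    note n = nb[OF a]
    have "{i. i < d \<and> max (lo B i) (lo C i) < min (hi B i) (hi C i)} = {..<d} - T B C"
      using n touch[OF a(1,2)] unfolding T_def by force
    moreover have "T B C \<subseteq> {..<d}" unfolding T_def by auto
    ultimately have "card {i. i < d \<and> max (lo B i) (lo C i) < min (hi B i) (hi C i)} = d - card (T B C)"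
      by (simp add: card_Diff_subset finite_subset)
    moreover have "card (T B C) \<le> d" using \<open>T B C \<subseteq> {..<d}\<close> by (metis card_lessThan card_mono finite_lessThan)
    ultimately show "?thesis B C" using n d0 by auto
  qed
  define Cu where "Cu B = {X. X \<subseteq> {..<d} \<and> (\<forall>i<d. (zero B i \<longrightarrow> i \<notin> X) \<and> (one B i \<longrightarrow> i \<in> X))}" for B
  define St where "St B = {i. i < d \<and> \<not> zero B i \<and> \<not> one B i}" for B
  define Ob where "Ob B = {i. i < d \<and> one B i}" for B
  have CuPow: "\<And>B. Cu B \<subseteq> Pow {..<d}" unfolding Cu_def by auto
  have cardCu: "\<And>B. B \<in> F \<Longrightarrow> card (Cu B) = 2 ^ card (St B)"
  proof -
    fix B assume B: "B \<in> F"
    have "Cu B = (\<lambda>Z. Ob B \<union> Z) ` Pow (St B)"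
    proof
      show "Cu B \<subseteq> (\<lambda>Z. Ob B \<union> Z) ` Pow (St B)"
      proof
        fix X assume X: "X \<in> Cu B"
        have "X = Ob B \<union> (X - Ob B)" using X unfolding Cu_def Ob_def by auto
        moreover have "X - Ob B \<in> Pow (St B)" using X unfolding Cu_def Ob_def St_def by auto
        ultimately show "X \<in> (\<lambda>Z. Ob B \<union> Z) ` Pow (St B)" by blast
      qed
    next
      show "(\<lambda>Z. Ob B \<union> Z) ` Pow (St B) \<subseteq> Cu B"
        using zo[OF B] unfolding Cu_def Ob_def St_def by auto
    qed
    moreover have "inj_on (\<lambda>Z. Ob B \<union> Z) (Pow (St B))"
      unfolding inj_on_def Ob_def St_def by blast
    moreover have "finite (St B)" unfolding St_def by auto
    ultimately show "card (Cu B) = 2 ^ card (St B)" by (simp add: card_image card_Pow)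
  qed
  have disj: "\<And>B C. B \<in> F \<Longrightarrow> C \<in> F \<Longrightarrow> B \<noteq> C \<Longrightarrow> Cu B \<inter> Cu C = {}"
  proof -
    fix B C assume a: "B \<in> F" "C \<in> F" "B \<noteq> C"
    have "T B C \<noteq> {}" using Tb[OF a] by auto
    then obtain i where "i \<in> T B C" by blast
    then show "Cu B \<inter> Cu C = {}" unfolding T_def Cu_def by blast
  qed
  have anti: "\<And>B C. B \<in> F \<Longrightarrow> St B = {} \<Longrightarrow> C \<in> F \<Longrightarrow> {..<d} - Ob B \<in> Cu C \<Longrightarrow> s \<le> card (St C)"
  proof -
    fix B C assume a: "B \<in> F" "St B = {}" "C \<in> F" "{..<d} - Ob B \<in> Cu C"
    have "B \<noteq> C"
    proof
      assume "B = C"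
      then have "\<forall>i<d. (zero B i \<longrightarrow> i \<notin> {..<d} - Ob B) \<and> (one B i \<longrightarrow> i \<in> {..<d} - Ob B)"
        using a(4) unfolding Cu_def by blast
      then have "\<not> zero B 0" "\<not> one B 0" using d0 unfolding Ob_def by auto
      then have "0 \<in> St B" using d0 unfolding St_def by auto
      then show False using a(2) by auto
    qed
    have sub: "{..<d} - St C \<subseteq> T B C"
    proof
      fix i assume i: "i \<in> {..<d} - St C"
      then have id: "i < d" by auto
      have "zero C i \<or> one C i" using i unfolding St_def by auto
      moreover have "i \<notin> St B" using a(2) by auto
      ultimately show "i \<in> T B C" using a(4) id unfolding T_def Cu_def Ob_def St_def by auto
    qed
    have "card ({..<d} - St C) \<le> card (T B C)"
      by (rule card_mono[OF _ sub]) (auto simp: T_def)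
    moreover have "card ({..<d} - St C) = d - card (St C)"
      by (subst card_Diff_subset) (auto simp: St_def)
    moreover have "card (T B C) \<le> d - s" using Tb[OF a(1,3) \<open>B \<noteq> C\<close>] by auto
    moreover have "card (St C) \<le> d" by (metis (no_types, lifting) St_def card_lessThan card_mono finite_lessThan mem_Collect_eq subsetI lessThan_iff)
    ultimately show "s \<le> card (St C)" using sd by linarith
  qed
  have Cu0: "\<And>B. B \<in> F \<Longrightarrow> St B = {} \<Longrightarrow> Cu B = {Ob B}"
  proof -
    fix B assume B: "B \<in> F" "St B = {}"
    have "\<And>i. i < d \<Longrightarrow> zero B i \<or> one B i" using B(2) unfolding St_def by auto
    then show "Cu B = {Ob B}" using zo[OF B(1)] unfolding Cu_def Ob_def by auto
  qed
  define F0 where "F0 = {B\<in>F. St B = {}}"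
  define G where "G = {B\<in>F. card (St B) < s}"
  have F0G: "F0 \<subseteq> G" "G \<subseteq> F" using s1 unfolding F0_def G_def by auto
  have finG: "finite G" "finite F0" using F0G fin by (meson finite_subset)+
  have finCu: "\<And>B. finite (Cu B)" using CuPow by (meson finite_Pow_iff finite_lessThan finite_subset)
  have cardUN: "\<And>H. H \<subseteq> F \<Longrightarrow> card (\<Union>B\<in>H. Cu B) = (\<Sum>B\<in>H. card (Cu B))"
  proof -
    fix H assume H: "H \<subseteq> F"
    then have "finite H" using fin by (rule finite_subset)
    then show "card (\<Union>B\<in>H. Cu B) = (\<Sum>B\<in>H. card (Cu B))"
    proof (rule card_UN_disjoint)
      show "\<forall>B\<in>H. finite (Cu B)" using finCu by blast
      show "\<forall>B\<in>H. \<forall>C\<in>H. B \<noteq> C \<longrightarrow> Cu B \<inter> Cu C = {}" using H disj by blast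
    qed
  qed
  have sumF: "(\<Sum>B\<in>F. card (Cu B)) \<le> 2^d"
  proof -
    have "card (\<Union>B\<in>F. Cu B) \<le> card (Pow {..<d::nat})"
      using CuPow by (intro card_mono) auto
    then show ?thesis using cardUN[of F] by (simp add: card_Pow)
  qed
  define Anti where "Anti = (\<lambda>B. {..<d} - Ob B) ` F0"
  have injA: "inj_on (\<lambda>B. {..<d} - Ob B) F0"
  proof (rule inj_onI)
    fix B C assume a: "B \<in> F0" "C \<in> F0" "{..<d} - Ob B = {..<d} - Ob C"
    have "Ob B \<subseteq> {..<d}" "Ob C \<subseteq> {..<d}" unfolding Ob_def by auto
    then have "Ob B = Ob C" using a(3) by blast
    then have "Ob B \<in> Cu B \<inter> Cu C" using Cu0 a unfolding F0_def by auto
    then show "B = C" using disj a unfolding F0_def by blast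
  qed
  have cardA: "card Anti = card F0" unfolding Anti_def using injA by (simp add: card_image)
  have AG: "Anti \<inter> (\<Union>B\<in>G. Cu B) = {}"
  proof (rule ccontr)
    assume "Anti \<inter> (\<Union>B\<in>G. Cu B) \<noteq> {}"
    then obtain B C where BC: "B \<in> F0" "C \<in> G" "{..<d} - Ob B \<in> Cu C" unfolding Anti_def by blast
    have "s \<le> card (St C)" using anti[of B C] BC unfolding F0_def G_def by blast
    then show False using BC(2) unfolding G_def by simp
  qed
  have ineq1: "card F0 + (\<Sum>B\<in>G. card (Cu B)) \<le> 2^d"
  proof -
    have fA: "finite Anti" unfolding Anti_def using finG by simp
    have "card (Anti \<union> (\<Union>B\<in>G. Cu B)) = card Anti + card (\<Union>B\<in>G. Cu B)"
      using AG fA finG finCu by (intro card_Un_disjoint) auto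
    moreover have "card (Anti \<union> (\<Union>B\<in>G. Cu B)) \<le> card (Pow {..<d::nat})"
      using CuPow by (intro card_mono) (auto simp: Anti_def)
    ultimately show ?thesis using cardA cardUN[OF F0G(2)] by (simp add: card_Pow)
  qed
  have s0: "(\<Sum>B\<in>F0. card (Cu B)) = card F0"
    using Cu0 unfolding F0_def by simp
  have s1': "2 * card (G - F0) \<le> (\<Sum>B\<in>G - F0. card (Cu B))"
  proof -
    have "\<And>B. B \<in> G - F0 \<Longrightarrow> 2 \<le> card (Cu B)"
    proof -
      fix B assume B: "B \<in> G - F0"
      then have "St B \<noteq> {}" "finite (St B)" unfolding F0_def G_def St_def by auto
      then have "1 \<le> card (St B)" by (simp add: Suc_leI card_gt_0_iff)
      then have "2^1 \<le> (2::nat) ^ card (St B)" by (intro power_increasing) auto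
      then show "2 \<le> card (Cu B)" using cardCu B F0G by auto
    qed
    then have "(\<Sum>B\<in>G - F0. 2) \<le> (\<Sum>B\<in>G - F0. card (Cu B))" by (intro sum_mono) auto
    then show ?thesis by simp
  qed
  have s2: "2^s * card (F - G) \<le> (\<Sum>B\<in>F - G. card (Cu B))"
  proof -
    have "\<And>B. B \<in> F - G \<Longrightarrow> 2^s \<le> card (Cu B)"
    proof -
      fix B assume B: "B \<in> F - G"
      then have "s \<le> card (St B)" unfolding G_def by auto
      then have "(2::nat)^s \<le> 2 ^ card (St B)" by (intro power_increasing) auto
      then show "2^s \<le> card (Cu B)" using cardCu B by auto
    qed
    then have "(\<Sum>B\<in>F - G. 2^s) \<le> (\<Sum>B\<in>F - G. card (Cu B))" by (intro sum_mono) auto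
    then show ?thesis by (simp add: mult.commute)
  qed
  have sG: "(\<Sum>B\<in>G. card (Cu B)) = (\<Sum>B\<in>G - F0. card (Cu B)) + (\<Sum>B\<in>F0. card (Cu B))"
    using F0G finG by (intro sum.subset_diff) auto
  have sF: "(\<Sum>B\<in>F. card (Cu B)) = (\<Sum>B\<in>F - G. card (Cu B)) + (\<Sum>B\<in>G. card (Cu B))"
    using F0G fin by (intro sum.subset_diff) auto
  define a where "a = card F0"
  define b where "b = card (G - F0)"
  define c where "c = card (F - G)"
  have cF: "card F = a + b + c"
  proof -
    have "card F = card (F - G) + card G"
      using card_Diff_subset[OF finG(1) F0G(2)] card_mono[OF fin F0G(2)] by simp
    moreover have "card G = card (G - F0) + card F0"
      using card_Diff_subset[OF finG(2) F0G(1)] card_mono[OF finG(1) F0G(1)] by simp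
    ultimately show ?thesis unfolding a_def b_def c_def by simp
  qed
  have i1: "2 * a + 2 * b \<le> (2::nat)^d" using ineq1 sG s0 s1' unfolding a_def b_def by linarith
  have i2: "a + 2 * b + 2^s * c \<le> (2::nat)^d" using sumF sF sG s0 s1' s2 unfolding a_def b_def c_def by linarith
  define t :: real where "t = 2^s"
  define D :: real where "D = 2^d"
  have t1: "t \<ge> 1" unfolding t_def by simp
  have r1: "2 * real a + 2 * real b \<le> D" 
  proof -
    have "real (2 * a + 2 * b) \<le> real ((2::nat)^d)" using i1 by (simp only: of_nat_le_iff)
    then show ?thesis unfolding D_def by simp
  qed
  have r2: "real a + 2 * real b + t * real c \<le> D" 
  proof -
    have "real (a + 2 * b + 2^s * c) \<le> real ((2::nat)^d)" using i2 by (simp only: of_nat_le_iff)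
    then show ?thesis unfolding D_def t_def by simp
  qed
  have "(t - 1) * (2 * real a + 2 * real b) \<le> (t - 1) * D" using r1 t1 by (intro mult_left_mono) auto
  then have key: "2 * t * (real a + real b + real c) \<le> (t + 1) * D" using r2 by (simp add: algebra_simps)
  have "(1/2 + 1/2^(s+1)) * 2^d = (t + 1) * D / (2 * t)" unfolding t_def D_def by (simp add: field_simps)
  moreover have "real (card F) = 2 * t * (real a + real b + real c) / (2 * t)" using t1 cF by simp
  moreover have "2 * t * (real a + real b + real c) / (2 * t) \<le> (t + 1) * D / (2 * t)"
    using key t1 by (intro divide_right_mono) auto
  ultimately show ?thesis by simp
qed


definition lo :: "nat set \<Rightarrow> nat set \<Rightarrow> nat \<Rightarrow> real" where
  "lo X S i = (if i \<in> S then 0 else if i \<in> X then 1 else 0)"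
definition hi :: "nat set \<Rightarrow> nat set \<Rightarrow> nat \<Rightarrow> real" where
  "hi X S i = (if i \<in> S then 2 else if i \<in> X then 2 else 1)"
definition bx :: "nat \<Rightarrow> nat set \<Rightarrow> nat set \<Rightarrow> (nat \<Rightarrow> real) set" where
  "bx d X S = box_set d (lo X S) (hi X S)"

lemma bx_is_box: "is_box d (bx d X S)"
  unfolding is_box_def bx_def by (intro exI[of _ "lo X S"] exI[of _ "hi X S"]) (auto simp: lo_def hi_def)

lemma bx_neighborly:
  assumes "1 \<le> card {i. i < d \<and> i \<notin> S \<and> i \<notin> S' \<and> (i \<in> X \<longleftrightarrow> i \<notin> X')}"
    and "card {i. i < d \<and> i \<notin> S \<and> i \<notin> S' \<and> (i \<in> X \<longleftrightarrow> i \<notin> X')} \<le> k" and "k \<le> d"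
  shows "neighborly k d (bx d X S) (bx d X' S')"
proof -
  define T where "T = {i. i < d \<and> i \<notin> S \<and> i \<notin> S' \<and> (i \<in> X \<longleftrightarrow> i \<notin> X')}"
  define a where "a = (\<lambda>i. max (lo X S i) (lo X' S' i))"
  define b where "b = (\<lambda>i. min (hi X S i) (hi X' S' i))"
  have int: "bx d X S \<inter> bx d X' S' = box_set d a b" unfolding bx_def a_def b_def by (rule box_set_inter)
  have le: "\<forall>i<d. a i \<le> b i" unfolding a_def b_def lo_def hi_def by auto
  have "{i. i < d \<and> a i < b i} = {..<d} - T" unfolding a_def b_def lo_def hi_def T_def by auto
  moreover have Tsub: "T \<subseteq> {..<d}" unfolding T_def by auto
  ultimately have c: "card {i. i < d \<and> a i < b i} = d - card T" by (simp add: card_Diff_subset finite_subset)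
  have "is_box_of_dim d (d - card T) (bx d X S \<inter> bx d X' S')"
    unfolding int is_box_of_dim_def using le c by blast
  moreover have "card T \<le> d" using Tsub by (metis card_lessThan card_mono finite_lessThan)
  ultimately show ?thesis unfolding neighborly_def using assms unfolding T_def[symmetric]
    by (intro exI[of _ "d - card T"]) auto
qed

lemma neighborly_sym: "neighborly k d B C \<Longrightarrow> neighborly k d C B"
  unfolding neighborly_def by (simp add: Int_commute)

lemma bx_eq:
  assumes "bx d X S = bx d X' S'" "i < d"
  shows "lo X S i = lo X' S' i \<and> hi X S i = hi X' S' i"
  using box_set_unique[of d "lo X S" "hi X S" "lo X' S'" "hi X' S'" i] assms
  unfolding bx_def by (auto simp: lo_def hi_def)

definition L1 :: "nat \<Rightarrow> nat \<Rightarrow> nat set set" where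
  "L1 d m = {X. X \<subseteq> {..<d} \<and> card X \<le> m}"
definition L2 :: "nat \<Rightarrow> nat \<Rightarrow> nat \<Rightarrow> nat set set" where
  "L2 d s m = {Y. Y \<subseteq> {s..<d} \<and> m < card Y}"
definition Fam :: "nat \<Rightarrow> nat \<Rightarrow> (nat \<Rightarrow> real) set set" where
  "Fam d s = (\<lambda>X. bx d X {}) ` L1 d ((d - s) div 2) \<union> (\<lambda>Y. bx d Y {..<s}) ` L2 d s ((d - s) div 2)"

lemma finite_L: "finite (L1 d m)" "finite (L2 d s m)"
  unfolding L1_def L2_def by (auto intro: finite_subset[of _ "Pow {..<d}"] finite_subset[of _ "Pow {s..<d}"])

lemma card_le_1: "finite T \<Longrightarrow> T \<noteq> {} \<Longrightarrow> 1 \<le> card T"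
  by (simp add: Suc_leI card_gt_0_iff)

lemma Fam_nf:
  assumes s1: "1 \<le> s" and sd: "2 * s \<le> d"
  shows "neighborly_family (d - s) d (Fam d s)"
proof -
  define m where "m = (d - s) div 2"
  have m2: "2 * m \<le> d - s" unfolding m_def by simp
  have XX: "neighborly (d - s) d (bx d X {}) (bx d X' {})" if "X \<in> L1 d m" "X' \<in> L1 d m" "X \<noteq> X'" for X X'
  proof -
    define T where "T = {i. i < d \<and> i \<notin> {} \<and> i \<notin> {} \<and> (i \<in> X \<longleftrightarrow> i \<notin> X')}"
    have sub: "X \<subseteq> {..<d}" "X' \<subseteq> {..<d}" using that unfolding L1_def by auto
    have "T \<noteq> {}"
    proof
      assume "T = {}"
      then have "X = X'" using sub unfolding T_def by blast
      then show False using that by simp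
    qed
    moreover have fT: "finite T" unfolding T_def by simp
    ultimately have "1 \<le> card T" by (rule card_le_1[rotated])
    have "T \<subseteq> X \<union> X'" unfolding T_def by auto
    then have "card T \<le> card (X \<union> X')" by (intro card_mono) (use sub in \<open>auto intro: finite_subset\<close>)
    also have "\<dots> \<le> card X + card X'" by (rule card_Un_le)
    also have "\<dots> \<le> d - s" using that m2 unfolding L1_def by auto
    finally show ?thesis using \<open>1 \<le> card T\<close> unfolding T_def by (intro bx_neighborly) auto
  qed
  have XY: "neighborly (d - s) d (bx d X {}) (bx d Y {..<s})" if "X \<in> L1 d m" "Y \<in> L2 d s m" for X Y
  proof -
    define T where "T = {i. i < d \<and> i \<notin> {} \<and> i \<notin> {..<s} \<and> (i \<in> X \<longleftrightarrow> i \<notin> Y)}"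
    have sub: "X \<subseteq> {..<d}" "Y \<subseteq> {s..<d}" using that unfolding L1_def L2_def by auto
    have "T \<noteq> {}"
    proof
      assume "T = {}"
      then have "Y \<subseteq> X" using sub unfolding T_def by fastforce
      then have "card Y \<le> card X" using sub by (intro card_mono) (auto intro: finite_subset)
      then show False using that unfolding L1_def L2_def by auto
    qed
    moreover have fT: "finite T" unfolding T_def by simp
    ultimately have "1 \<le> card T" by (rule card_le_1[rotated])
    have "T \<subseteq> {s..<d}" unfolding T_def by auto
    then have "card T \<le> d - s" by (metis card_atLeastLessThan card_mono finite_atLeastLessThan)
    then show ?thesis using \<open>1 \<le> card T\<close> unfolding T_def by (intro bx_neighborly) auto
  qed
  have YY: "neighborly (d - s) d (bx d Y {..<s}) (bx d Y' {..<s})" if "Y \<in> L2 d s m" "Y' \<in> L2 d s m" "Y \<noteq> Y'" for Y Y'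
  proof -
    define T where "T = {i. i < d \<and> i \<notin> {..<s} \<and> i \<notin> {..<s} \<and> (i \<in> Y \<longleftrightarrow> i \<notin> Y')}"
    have sub: "Y \<subseteq> {s..<d}" "Y' \<subseteq> {s..<d}" using that unfolding L2_def by auto
    have "T \<noteq> {}"
    proof
      assume "T = {}"
      then have h: "\<And>x. x < d \<Longrightarrow> x \<ge> s \<Longrightarrow> (x \<in> Y \<longleftrightarrow> x \<in> Y')" unfolding T_def by auto
      have "Y = Y'"
      proof (rule set_eqI)
        fix x show "x \<in> Y \<longleftrightarrow> x \<in> Y'" using h[of x] sub by auto
      qed
      then show False using that by simp
    qed
    moreover have fT: "finite T" unfolding T_def by simp
    ultimately have "1 \<le> card T" by (rule card_le_1[rotated])
    have "T \<subseteq> {s..<d}" unfolding T_def by auto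
    then have "card T \<le> d - s" by (metis card_atLeastLessThan card_mono finite_atLeastLessThan)
    then show ?thesis using \<open>1 \<le> card T\<close> unfolding T_def by (intro bx_neighborly) auto
  qed
  show ?thesis unfolding neighborly_family_def
  proof (intro conjI ballI impI)
    fix B assume "B \<in> Fam d s" then show "is_box d B" unfolding Fam_def using bx_is_box by auto
  next
    fix B C assume BC: "B \<in> Fam d s" "C \<in> Fam d s" "B \<noteq> C"
    show "neighborly (d - s) d B C"
      using BC unfolding Fam_def m_def[symmetric] image_iff Un_iff
      by (elim disjE bexE) (auto intro: XX XY YY neighborly_sym)
  qed
qed

lemma card_Fam:
  assumes "1 \<le> s" "s \<le> d"
  shows "card (Fam d s) = card (L1 d ((d - s) div 2)) + card (L2 d s ((d - s) div 2))"
proof -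
  define m where "m = (d - s) div 2"
  have inj1: "inj_on (\<lambda>X. bx d X {}) (L1 d m)"
  proof (rule inj_onI)
    fix X X' assume a: "X \<in> L1 d m" "X' \<in> L1 d m" "bx d X {} = bx d X' {}"
    have h: "\<And>i. i < d \<Longrightarrow> (i \<in> X \<longleftrightarrow> i \<in> X')"
    proof -
      fix i assume i: "i < d"
      have "lo X {} i = lo X' {} i" using bx_eq[OF a(3) i] by simp
      then show "i \<in> X \<longleftrightarrow> i \<in> X'" unfolding lo_def by (auto split: if_splits)
    qed
    show "X = X'"
    proof (rule set_eqI)
      fix x show "x \<in> X \<longleftrightarrow> x \<in> X'" using h[of x] a(1,2) unfolding L1_def by auto
    qed
  qed
  have inj2: "inj_on (\<lambda>Y. bx d Y {..<s}) (L2 d s m)"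
  proof (rule inj_onI)
    fix X X' assume a: "X \<in> L2 d s m" "X' \<in> L2 d s m" "bx d X {..<s} = bx d X' {..<s}"
    have h: "\<And>i. i < d \<Longrightarrow> s \<le> i \<Longrightarrow> (i \<in> X \<longleftrightarrow> i \<in> X')"
    proof -
      fix i assume i: "i < d" "s \<le> i"
      have "lo X {..<s} i = lo X' {..<s} i" using bx_eq[OF a(3) i(1)] by simp
      then show "i \<in> X \<longleftrightarrow> i \<in> X'" using i unfolding lo_def by (auto split: if_splits)
    qed
    show "X = X'"
    proof (rule set_eqI)
      fix x show "x \<in> X \<longleftrightarrow> x \<in> X'" using h[of x] a(1,2) unfolding L2_def by auto
    qed
  qed
  have disj: "(\<lambda>X. bx d X {}) ` L1 d m \<inter> (\<lambda>Y. bx d Y {..<s}) ` L2 d s m = {}"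
  proof (rule ccontr)
    assume "(\<lambda>X. bx d X {}) ` L1 d m \<inter> (\<lambda>Y. bx d Y {..<s}) ` L2 d s m \<noteq> {}"
    then obtain X Y where e: "bx d X {} = bx d Y {..<s}" by blast
    have "0 < d" "0 < s" using assms by auto
    from bx_eq[OF e \<open>0 < d\<close>] \<open>0 < s\<close> show False unfolding lo_def hi_def by (auto split: if_splits)
  qed
  show ?thesis unfolding Fam_def m_def[symmetric]
    using card_Un_disjoint[OF finite_imageI[OF finite_L(1)] finite_imageI[OF finite_L(2)] disj]
      card_image[OF inj1] card_image[OF inj2] by simp
qed

lemma count1:
  assumes "s \<le> d"
  shows "2^d \<le> 2 * card (L1 d ((d - s) div 2)) + s * (d choose (d div 2))"
proof -
  define m where "m = (d - s) div 2"
  define A where "A = {..<d}"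
  define H where "H = {X. X \<subseteq> A \<and> d - m \<le> card X}"
  define Mid where "Mid = (\<Union>k\<in>{m<..<d-m}. {X. X \<subseteq> A \<and> card X = k})"
  have fA: "finite A" unfolding A_def by simp
  have cA: "card A = d" unfolding A_def by simp
  have "Pow A \<subseteq> L1 d m \<union> H \<union> Mid"
    unfolding L1_def H_def Mid_def A_def by (auto simp: not_le)
  then have "card (Pow A) \<le> card (L1 d m \<union> H \<union> Mid)"
    by (intro card_mono) (auto simp: L1_def H_def Mid_def A_def intro: finite_subset[of _ "Pow {..<d}"])
  also have "\<dots> \<le> card (L1 d m) + card H + card Mid" by (meson card_Un_le add_mono le_trans order_refl)
  finally have 1: "2^d \<le> card (L1 d m) + card H + card Mid" using fA cA by (simp add: card_Pow)
  have "H \<subseteq> (\<lambda>X. A - X) ` L1 d m"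
  proof
    fix X assume X: "X \<in> H"
    then have "X \<subseteq> A" unfolding H_def by auto
    then have "X = A - (A - X)" by auto
    moreover have "A - X \<in> L1 d m"
      using X fA cA unfolding H_def L1_def A_def by (auto simp: card_Diff_subset finite_subset)
    ultimately show "X \<in> (\<lambda>X. A - X) ` L1 d m" by blast
  qed
  then have 2: "card H \<le> card (L1 d m)"
    by (meson card_image_le card_mono finite_L(1) finite_imageI le_trans)
  have "card Mid \<le> (\<Sum>k\<in>{m<..<d-m}. card {X. X \<subseteq> A \<and> card X = k})"
    unfolding Mid_def by (rule card_UN_le) simp
  also have "\<dots> = (\<Sum>k\<in>{m<..<d-m}. d choose k)" using n_subsets[OF fA] cA by simp
  also have "\<dots> \<le> (\<Sum>k\<in>{m<..<d-m}. d choose (d div 2))" by (intro sum_mono binomial_maximum)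
  also have "\<dots> = card {m<..<d-m} * (d choose (d div 2))" by simp
  also have "\<dots> \<le> s * (d choose (d div 2))"
  proof -
    have "card {m<..<d-m} \<le> s" unfolding m_def using assms by simp
    then show ?thesis by (rule mult_right_mono) simp
  qed
  finally have 3: "card Mid \<le> s * (d choose (d div 2))" .
  show ?thesis using 1 2 3 unfolding m_def by linarith
qed

lemma count2:
  assumes "s \<le> d"
  shows "2^(d-s) \<le> 2 * card (L2 d s ((d - s) div 2)) + ((d-s) choose ((d-s) div 2))"
proof -
  define n where "n = d - s"
  define m where "m = (d - s) div 2"
  define A where "A = {s..<d}"
  define Lo where "Lo = {Y. Y \<subseteq> A \<and> card Y \<le> m}"
  define Lay where "Lay = {Y. Y \<subseteq> A \<and> card Y = m}"
  have fA: "finite A" unfolding A_def by simp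
  have cA: "card A = n" unfolding A_def n_def by simp
  have fLo: "finite Lo" "finite Lay" unfolding Lo_def Lay_def using fA by (auto intro: finite_subset[of _ "Pow A"])
  have "Pow A \<subseteq> L2 d s m \<union> Lo" unfolding L2_def Lo_def A_def by auto
  then have "card (Pow A) \<le> card (L2 d s m \<union> Lo)"
    by (intro card_mono) (use finite_L(2) fLo in auto)
  also have "\<dots> \<le> card (L2 d s m) + card Lo" by (rule card_Un_le)
  finally have 1: "2^n \<le> card (L2 d s m) + card Lo" using fA cA by (simp add: card_Pow)
  have "Lo \<subseteq> (\<lambda>X. A - X) ` (L2 d s m \<union> Lay)"
  proof
    fix X assume X: "X \<in> Lo"
    then have XA: "X \<subseteq> A" unfolding Lo_def by auto
    then have "X = A - (A - X)" by auto
    moreover have "card (A - X) = n - card X" using XA fA cA by (simp add: card_Diff_subset finite_subset)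
    then have "A - X \<in> L2 d s m \<union> Lay"
      using X unfolding Lo_def L2_def Lay_def A_def m_def n_def by auto
    ultimately show "X \<in> (\<lambda>X. A - X) ` (L2 d s m \<union> Lay)" by blast
  qed
  then have "card Lo \<le> card (L2 d s m \<union> Lay)"
    by (meson card_image_le card_mono finite_L(2) fLo(2) finite_UnI finite_imageI le_trans)
  also have "\<dots> \<le> card (L2 d s m) + card Lay" by (rule card_Un_le)
  also have "card Lay = n choose m" unfolding Lay_def using n_subsets[OF fA] cA by simp
  finally have 2: "card Lo \<le> card (L2 d s m) + (n choose m)" .
  show ?thesis using 1 2 unfolding m_def n_def by linarith
qed


lemma nkd_props:
  assumes s1: "1 \<le> s" and sd: "2 * s \<le> d"
  shows "real (nkd (d - s) d) \<le> (1/2 + 1/2^(s+1)) * 2^d \<and> card (Fam d s) \<le> nkd (d - s) d"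
proof -
  define S where "S = {card F |F. finite F \<and> neighborly_family (d - s) d F}"
  have sd': "s \<le> d" using sd by simp
  have bnd: "\<And>F. finite F \<Longrightarrow> neighborly_family (d - s) d F \<Longrightarrow> real (card F) \<le> (1/2 + 1/2^(s+1)) * 2^d"
    using upper[OF s1 sd'] by blast
  have c1: "(1/2 + 1/2^(s+1)) * (2::real)^d \<le> 2^d"
  proof -
    have "(2::real) \<le> 2^(s+1)" using power_increasing[of 1 "s+1" "2::real"] by simp
    then have "(1::real)/2^(s+1) \<le> 1/2" by (intro divide_left_mono) auto
    then have h: "1/2 + 1/2^(s+1) \<le> (1::real)" by linarith
    show ?thesis using mult_right_mono[OF h, of "2^d"] by simp
  qed
  have "S \<subseteq> {..2^d}"
  proof
    fix x assume "x \<in> S"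
    then obtain F where F: "x = card F" "finite F" "neighborly_family (d - s) d F" unfolding S_def by blast
    have "real x \<le> 2^d" using bnd[OF F(2,3)] c1 F(1) by linarith
    then show "x \<in> {..2^d}" by (simp add: of_nat_le_iff[symmetric])
  qed
  then have fS: "finite S" by (rule finite_subset) simp
  have "0 \<in> S" unfolding S_def neighborly_family_def by (intro CollectI exI[of _ "{}"]) simp
  then have ne: "S \<noteq> {}" by blast
  have "nkd (d - s) d \<in> S" unfolding nkd_def S_def[symmetric] using fS ne by (rule Max_in)
  then obtain F where F: "nkd (d - s) d = card F" "finite F" "neighborly_family (d - s) d F" unfolding S_def by blast
  have 1: "real (nkd (d - s) d) \<le> (1/2 + 1/2^(s+1)) * 2^d" using bnd[OF F(2,3)] F(1) by simp
  have "finite (Fam d s)" unfolding Fam_def using finite_L by simp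
  then have "card (Fam d s) \<in> S" unfolding S_def using Fam_nf[OF s1 sd] by blast
  then have 2: "card (Fam d s) \<le> nkd (d - s) d" unfolding nkd_def S_def[symmetric] by (rule Max_ge[OF fS])
  show ?thesis using 1 2 by simp
qed

lemma lower_real:
  assumes s1: "1 \<le> s" and sd: "2 * s \<le> d"
  shows "(1/2 + 1/2^(s+1)) * 2^d - real (s+1) * 2^d / sqrt (real d) \<le> real (card (Fam d s))"
proof -
  have sd': "s \<le> d" using sd by simp
  define M where "M = real (d choose (d div 2))"
  define M' where "M' = real ((d-s) choose ((d-s) div 2))"
  define D :: real where "D = 2^d"
  define D' :: real where "D' = 2^(d-s)"
  define q where "q = sqrt (real d)"
  define r where "r = sqrt (real (d - s))"
  have cF: "card (Fam d s) = card (L1 d ((d - s) div 2)) + card (L2 d s ((d - s) div 2))"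
    by (rule card_Fam[OF s1 sd'])
  have k1: "D \<le> 2 * real (card (L1 d ((d - s) div 2))) + real s * M"
  proof -
    have "real (2^d) \<le> real (2 * card (L1 d ((d - s) div 2)) + s * (d choose (d div 2)))"
      using count1[OF sd'] by (simp only: of_nat_le_iff)
    then show ?thesis unfolding D_def M_def by simp
  qed
  have k2: "D' \<le> 2 * real (card (L2 d s ((d - s) div 2))) + M'"
  proof -
    have "real (2^(d-s)) \<le> real (2 * card (L2 d s ((d - s) div 2)) + ((d-s) choose ((d-s) div 2)))"
      using count2[OF sd'] by (simp only: of_nat_le_iff)
    then show ?thesis unfolding D'_def M'_def by simp
  qed
  have b1: "M * q \<le> D" unfolding M_def q_def D_def by (rule mid_bound_real)
  have b2: "M' * r \<le> D'" unfolding M'_def r_def D'_def by (rule mid_bound_real)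
  have q0: "q > 0" unfolding q_def using s1 sd by simp
  have r0: "r > 0" unfolding r_def using s1 sd by simp
  have qr: "q \<le> 2 * r"
  proof -
    have "real d \<le> 4 * real (d - s)" using sd by simp
    then have "sqrt (real d) \<le> sqrt (4 * real (d - s))" by simp
    also have "\<dots> = 2 * r" unfolding r_def by (simp add: real_sqrt_mult)
    finally show ?thesis unfolding q_def .
  qed
  have DD: "D' * 2^s = D" unfolding D'_def D_def using sd' by (simp flip: power_add)
  have DD': "D' \<le> D" unfolding D'_def D_def by (rule power_increasing) auto
  have M0: "M \<ge> 0" "M' \<ge> 0" unfolding M_def M'_def by auto
  have e1: "real s * M * q \<le> real s * D" using b1 by (simp add: mult.assoc mult_left_mono)
  have e2: "M' * q \<le> 2 * D" 
  proof -
    have "M' * q \<le> M' * (2 * r)" using qr M0 by (intro mult_left_mono) auto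
    also have "\<dots> = 2 * (M' * r)" by simp
    also have "\<dots> \<le> 2 * D" using b2 DD' by simp
    finally show ?thesis .
  qed
  have key: "(real s * M + M') / 2 \<le> real (s+1) * D / q"
  proof -
    have sD: "0 \<le> real s * D" unfolding D_def by simp
    have "(real s * M + M') / 2 * q = (real s * M * q + M' * q) / 2" by (simp add: algebra_simps)
    also have "\<dots> \<le> (real s * D + 2 * D) / 2" using e1 e2 by (intro divide_right_mono add_mono) auto
    also have "\<dots> \<le> real s * D + D" using sD by (simp add: field_simps)
    also have "\<dots> = real (s+1) * D" by (simp add: algebra_simps)
    finally have "(real s * M + M') / 2 * q \<le> real (s+1) * D" .
    then show ?thesis using q0 by (simp add: field_simps)
  qed
  have "(1/2 + 1/2^(s+1)) * 2^d = D / 2 + D' / 2"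
    unfolding D_def D'_def using sd' by (simp add: field_simps flip: power_add)
  then show ?thesis using k1 k2 key cF unfolding D_def[symmetric] q_def[symmetric] by simp
qed

theorem theorem2:
  fixes s :: nat
  assumes "s \<ge> 1"
  shows "(\<forall>d. 2 * s \<le> d \<longrightarrow> real (nkd (d - s) d) \<le> (1/2 + 1 / 2 ^ (s + 1)) * 2 ^ d)
    \<and> (\<exists>f :: nat \<Rightarrow> real. f \<in> o(\<lambda>d. 2 ^ d) \<and>
         (\<forall>d. 2 * s \<le> d \<longrightarrow> (1/2 + 1 / 2 ^ (s + 1)) * 2 ^ d - f d \<le> real (nkd (d - s) d)))
    \<and> (\<lambda>d. real (nkd (d - s) d) / 2 ^ d) \<longlonglongrightarrow> (2 ^ s + 1) / 2 ^ (s + 1)"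
proof -
  define c :: real where "c = 1/2 + 1 / 2 ^ (s + 1)"
  define f :: "nat \<Rightarrow> real" where "f d = real (s+1) * 2^d / sqrt (real d)" for d
  have up: "\<And>d. 2 * s \<le> d \<Longrightarrow> real (nkd (d - s) d) \<le> c * 2 ^ d"
    using nkd_props[OF assms] unfolding c_def by blast
  have lowb: "\<And>d. 2 * s \<le> d \<Longrightarrow> c * 2 ^ d - f d \<le> real (nkd (d - s) d)"
  proof -
    fix d assume d: "2 * s \<le> d"
    have "real (card (Fam d s)) \<le> real (nkd (d - s) d)" using nkd_props[OF assms d] by simp
    then show "c * 2 ^ d - f d \<le> real (nkd (d - s) d)"
      using lower_real[OF assms d] unfolding c_def f_def by linarith
  qed
  have lim0: "(\<lambda>d. real (s+1) * (1 / sqrt (real d))) \<longlonglongrightarrow> 0"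
  proof -
    have "filterlim (\<lambda>d::nat. sqrt (real d)) at_top sequentially"
      by (rule filterlim_compose[OF sqrt_at_top filterlim_real_sequentially])
    then have "(\<lambda>d::nat. inverse (sqrt (real d))) \<longlonglongrightarrow> 0" by (rule tendsto_inverse_0_at_top)
    then have "(\<lambda>d::nat. 1 / sqrt (real d)) \<longlonglongrightarrow> 0" by (simp add: inverse_eq_divide)
    then show ?thesis by (rule tendsto_mult_right_zero)
  qed
  have fo: "f \<in> o(\<lambda>d. 2 ^ d)"
  proof (rule smalloI_tendsto)
    have "\<And>d. f d / 2^d = real (s+1) * (1 / sqrt (real d))" unfolding f_def by simp
    then show "((\<lambda>d. f d / 2 ^ d) \<longlongrightarrow> 0) at_top" using lim0 by simp
    show "\<forall>\<^sub>F x in at_top. (2::real) ^ x \<noteq> 0" by simp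
  qed
  have lim: "(\<lambda>d. real (nkd (d - s) d) / 2 ^ d) \<longlonglongrightarrow> c"
  proof (rule tendsto_sandwich[of "\<lambda>d. c - real (s+1) * (1 / sqrt (real d))" _ _ "\<lambda>d. c"])
    show "\<forall>\<^sub>F n in sequentially. c - real (s+1) * (1 / sqrt (real n)) \<le> real (nkd (n - s) n) / 2 ^ n"
      unfolding eventually_sequentially
    proof (intro exI allI impI)
      fix n assume n: "2 * s \<le> n"
      have "(c * 2 ^ n - f n) / 2^n \<le> real (nkd (n - s) n) / 2 ^ n"
        using lowb[OF n] by (simp add: divide_right_mono)
      moreover have "(c * 2 ^ n - f n) / 2^n = c - real (s+1) * (1 / sqrt (real n))"
        unfolding f_def by (simp add: field_simps)
      ultimately show "c - real (s+1) * (1 / sqrt (real n)) \<le> real (nkd (n - s) n) / 2 ^ n" by simp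
    qed
    show "\<forall>\<^sub>F n in sequentially. real (nkd (n - s) n) / 2 ^ n \<le> c"
      unfolding eventually_sequentially
    proof (intro exI allI impI)
      fix n assume n: "2 * s \<le> n"
      show "real (nkd (n - s) n) / 2 ^ n \<le> c" using up[OF n] by (simp add: field_simps)
    qed
    show "(\<lambda>n. c - real (s+1) * (1 / sqrt (real n))) \<longlonglongrightarrow> c"
      using tendsto_diff[OF tendsto_const lim0, of c] by simp
    show "(\<lambda>n. c) \<longlonglongrightarrow> c" by simp
  qed
  have ce: "c = (2 ^ s + 1) / 2 ^ (s + 1)" unfolding c_def by (simp add: field_simps)
  show ?thesis
  proof (intro conjI allI impI)
    fix d :: nat assume "2 * s \<le> d"
    then show "real (nkd (d - s) d) \<le> (1/2 + 1 / 2 ^ (s + 1)) * 2 ^ d" using up[of d] unfolding c_def by blast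
  next
    show "\<exists>f :: nat \<Rightarrow> real. f \<in> o(\<lambda>d. 2 ^ d) \<and>
         (\<forall>d. 2 * s \<le> d \<longrightarrow> (1/2 + 1 / 2 ^ (s + 1)) * 2 ^ d - f d \<le> real (nkd (d - s) d))"
    proof (intro exI[of _ f] conjI allI impI)
      show "f \<in> o(\<lambda>d. 2 ^ d)" by (rule fo)
      fix d :: nat assume "2 * s \<le> d"
      then show "(1/2 + 1 / 2 ^ (s + 1)) * 2 ^ d - f d \<le> real (nkd (d - s) d)" using lowb[of d] unfolding c_def by blast
    qed
  next
    show "(\<lambda>d. real (nkd (d - s) d) / 2 ^ d) \<longlonglongrightarrow> (2 ^ s + 1) / 2 ^ (s + 1)"
      using lim unfolding ce .
  qed
qed
end
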